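(* Let $n,m\ge1$, $r>0$, and let $\mathbf b_1,\dots,\mathbf b_m\in[0,\infty)^n$ be nonzero vectors with nonnegative entries. Put $D_{ij}=\frac{r}{m}(\mathbf b_i\cdot\mathbf b_j)$ for $i,j=1,\dots,m$ and $\overline D=\max_{i,j}D_{ij}$. Define a sequence $\alpha^{(t)}=(\alpha^{(t)}_1,\dots,\alpha^{(t)}_m)$, $t=0,1,2,\dots$, by $\alpha^{(0)}_k=\sqrt{1/(\overline D m)}$ for all $k$, and, given $\alpha^{(t)}$: compute $E_i^{(t)}=\sum_{j=1}^m D_{ij}\alpha^{(t)}_i\alpha^{(t)}_j-1$ for $i=1,\dots,m$; choose an index $k=k_t$ with $|E^{(t)}_k|=\max_i|E^{(t)}_i|$; set $\alpha^{(t+1)}_i=\alpha^{(t)}_i$ for $i\ne k$ and $$\alpha^{(t+1)}_k=\frac{-s+\sqrt{s^2+4D_{kk}}}{2D_{kk}},\qquad s=\sum_{i\ne k}D_{ik}\alpha^{(t)}_i.$$ Then the set $\{\alpha^{(t)}_k: k=1,\dots,m,\ t\ge0\}$ is bounded above, and there is a number $B>0$ such that $\alpha^{(t)}_k>B$ for all $k$ and all $t$.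
   Context: Note $D$ is symmetric with nonnegative entries and $D_{kk}>0$. The update of $\alpha_k$ is the unique positive root of the quadratic $D_{kk}\alpha_k^2+s\alpha_k-1=0$, i.e. it makes the $k$-th equation of the system $\sum_j D_{kj}\alpha_k\alpha_j=1$ hold exactly. *)

theory Defs
  imports Complex_Main
begin

text \<open>Gram-type matrix D_ij = (r/m) (b_i . b_j), vectors indexed 0..<m, coordinates 0..<n.\<close>
definition Dmat :: "nat \<Rightarrow> nat \<Rightarrow> real \<Rightarrow> (nat \<Rightarrow> nat \<Rightarrow> real) \<Rightarrow> nat \<Rightarrow> nat \<Rightarrow> real" where
  "Dmat n m r b i j = r / real m * (\<Sum>l<n. b i l * b j l)"

end

theory Submission
  imports Defs
begin

lemma sq_gt: assumes "(d::real) > 0" shows "sqrt (s\<^sup>2 + 4*d) > \<bar>s\<bar>"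
proof -
  have "sqrt (s\<^sup>2) < sqrt (s\<^sup>2 + 4*d)" using assms by (subst real_sqrt_less_iff) simp
  thus ?thesis by simp
qed

lemma upd_eq: assumes "(d::real) > 0"
  shows "(-s + sqrt(s\<^sup>2+4*d))/(2*d) = 2/(s+sqrt(s\<^sup>2+4*d))"
proof -
  have p: "s + sqrt(s\<^sup>2+4*d) > 0" using sq_gt[OF assms, of s] by linarith
  have "(sqrt(s\<^sup>2+4*d))\<^sup>2 = s\<^sup>2+4*d" using assms by (intro real_sqrt_pow2) simp
  hence "(-s + sqrt(s\<^sup>2+4*d)) * (s+sqrt(s\<^sup>2+4*d)) = 4*d" by (simp add: algebra_simps power2_eq_square)
  thus ?thesis using p assms by (simp add: field_simps)
qed

lemma upd_pos: assumes "(d::real) > 0" shows "2/(s+sqrt(s\<^sup>2+4*d)) > 0"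
  using sq_gt[OF assms, of s] by simp

lemma upd_le: assumes "(d::real) > 0" "s \<ge> 0" shows "2/(s+sqrt(s\<^sup>2+4*d)) \<le> 1/sqrt d"
proof -
  have "sqrt (4*d) \<le> sqrt(s\<^sup>2+4*d)" by simp
  moreover have "sqrt (4*d) = 2 * sqrt d" by (simp add: real_sqrt_mult)
  ultimately have "2 * sqrt d \<le> s+sqrt(s\<^sup>2+4*d)" using assms by linarith
  moreover have "2 * sqrt d > 0" using assms by simp
  ultimately have "2 / (s+sqrt(s\<^sup>2+4*d)) \<le> 2 / (2 * sqrt d)" by (intro frac_le) auto
  thus ?thesis by simp
qed

lemma upd_ge: assumes "(d::real) > 0" "s \<ge> 0" "s \<le> S" "d \<le> DD"
  shows "2/(S+sqrt(S\<^sup>2+4*DD)) \<le> 2/(s+sqrt(s\<^sup>2+4*d))"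
proof -
  have "s\<^sup>2 \<le> S\<^sup>2" using assms by (simp add: power_mono)
  hence "sqrt(s\<^sup>2+4*d) \<le> sqrt(S\<^sup>2+4*DD)" using assms by (intro real_sqrt_le_mono) linarith
  moreover have "s+sqrt(s\<^sup>2+4*d) > 0" using upd_pos[OF assms(1)] sq_gt[OF assms(1), of s] by linarith
  ultimately have "s+sqrt(s\<^sup>2+4*d) \<le> S+sqrt(S\<^sup>2+4*DD)" "0 < s+sqrt(s\<^sup>2+4*d)" using assms by linarith+
  thus ?thesis by (intro frac_le) auto
qed

theorem lemma2:
  fixes n m :: nat and r :: real and b :: "nat \<Rightarrow> nat \<Rightarrow> real"
    and alpha :: "nat \<Rightarrow> nat \<Rightarrow> real" and ks :: "nat \<Rightarrow> nat"
  assumes "n \<ge> 1" and "m \<ge> 1" and "r > 0"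
    and b_nonneg: "\<forall>i<m. \<forall>l<n. b i l \<ge> 0"
    and b_nonzero: "\<forall>i<m. \<exists>l<n. b i l \<noteq> 0"
    and alpha0: "\<forall>k<m. alpha 0 k =
        sqrt (1 / (Max {Dmat n m r b i j | i j. i < m \<and> j < m} * real m))"
    and ks_max: "\<forall>t. ks t < m \<and> (\<forall>i<m.
        \<bar>(\<Sum>j<m. Dmat n m r b i j * alpha t i * alpha t j) - 1\<bar>
          \<le> \<bar>(\<Sum>j<m. Dmat n m r b (ks t) j * alpha t (ks t) * alpha t j) - 1\<bar>)"
    and step_other: "\<forall>t. \<forall>i<m. i \<noteq> ks t \<longrightarrow> alpha (Suc t) i = alpha t i"
    and step_k: "\<forall>t. alpha (Suc t) (ks t) =
        (let k = ks t; s = (\<Sum>i\<in>{..<m} - {k}. Dmat n m r b i k * alpha t i)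
         in (- s + sqrt (s\<^sup>2 + 4 * Dmat n m r b k k)) / (2 * Dmat n m r b k k))"
  shows "(\<exists>U. \<forall>t. \<forall>k<m. alpha t k \<le> U) \<and> (\<exists>B>0. \<forall>t. \<forall>k<m. alpha t k > B)"
proof -
  define D where "D = Dmat n m r b"
  have Dnn: "D i j \<ge> 0" if "i<m" "j<m" for i j
    unfolding D_def Dmat_def using that b_nonneg \<open>r>0\<close> by (auto intro!: sum_nonneg mult_nonneg_nonneg divide_nonneg_nonneg)
  have Dpos: "D k k > 0" if km0: "k<m" for k
  proof -
    obtain l where l: "l<n" "b k l \<noteq> 0" using b_nonzero km0 by blast
    have "0 < b k l * b k l" using l(2) by (cases "b k l > 0") (auto simp: mult_neg_neg)
    also have "\<dots> \<le> (\<Sum>l<n. b k l * b k l)" using l by (intro member_le_sum) auto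
    finally show ?thesis unfolding D_def Dmat_def using \<open>r>0\<close> \<open>m\<ge>1\<close> by simp
  qed
  define M where "M = Max {Dmat n m r b i j | i j. i < m \<and> j < m}"
  have fin: "finite {Dmat n m r b i j | i j. i < m \<and> j < m}"
  proof -
    have "{Dmat n m r b i j | i j. i < m \<and> j < m} = (\<lambda>(i,j). Dmat n m r b i j) ` ({..<m}\<times>{..<m})" by auto
    thus ?thesis by simp
  qed
  have "D 0 0 \<le> M" unfolding M_def D_def using \<open>m\<ge>1\<close> by (intro Max_ge[OF fin]) force
  hence Mpos: "M > 0" using Dpos[of 0] \<open>m\<ge>1\<close> by linarith
  define a0 where "a0 = sqrt (1 / (M * real m))"
  have a0pos: "a0 > 0" unfolding a0_def using Mpos \<open>m\<ge>1\<close> by simp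
  have al0: "\<forall>k<m. alpha 0 k = a0" using alpha0 unfolding a0_def M_def by simp
  define U where "U = a0 + (\<Sum>k<m. 1 / sqrt (D k k))"
  have Ubd: "1 / sqrt (D k k) \<le> U" "a0 \<le> U" if "k<m" for k
  proof -
    have "1 / sqrt (D k k) \<le> (\<Sum>k<m. 1 / sqrt (D k k))"
      using that Dpos by (intro member_le_sum) (auto simp: less_imp_le)
    moreover have "0 \<le> (\<Sum>k<m. 1 / sqrt (D k k))" using Dpos by (intro sum_nonneg) (auto simp: less_imp_le)
    ultimately show "1 / sqrt (D k k) \<le> U" "a0 \<le> U" unfolding U_def using a0pos by linarith+
  qed
  have upd: "alpha (Suc t) (ks t) = 2 / (s + sqrt (s\<^sup>2 + 4 * D (ks t) (ks t)))"
    if "s = (\<Sum>i\<in>{..<m} - {ks t}. D i (ks t) * alpha t i)" for t s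
  proof -
    have km: "ks t < m" using ks_max by blast
    have "alpha (Suc t) (ks t) = (- s + sqrt (s\<^sup>2 + 4 * D (ks t) (ks t))) / (2 * D (ks t) (ks t))"
      using step_k[rule_format, of t] that unfolding D_def Let_def by simp
    thus ?thesis using upd_eq[OF Dpos[OF km], of s] by simp
  qed
  have inv: "\<forall>k<m. 0 < alpha t k \<and> alpha t k \<le> U" for t
  proof (induction t)
    case 0 then show ?case using al0 a0pos Ubd by auto
  next
    case (Suc t)
    define s where "s = (\<Sum>i\<in>{..<m} - {ks t}. D i (ks t) * alpha t i)"
    have km: "ks t < m" using ks_max by blast
    have s0: "s \<ge> 0" unfolding s_def using Suc Dnn km by (intro sum_nonneg mult_nonneg_nonneg) auto
    have "0 < alpha (Suc t) (ks t) \<and> alpha (Suc t) (ks t) \<le> U"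
      using upd[OF s_def] upd_pos[OF Dpos[OF km]] upd_le[OF Dpos[OF km] s0] Ubd(1)[OF km] by auto
    thus ?case using Suc step_other by metis
  qed
  define S where "S = (\<Sum>i<m. \<Sum>k<m. D i k) * U"
  define DD where "DD = (\<Sum>k<m. D k k)"
  define L where "L = 2 / (S + sqrt (S\<^sup>2 + 4*DD))"
  have Lpos: "L > 0" unfolding L_def
  proof (rule upd_pos)
    have "D 0 0 \<le> DD" unfolding DD_def using \<open>m\<ge>1\<close> Dpos by (intro member_le_sum) (auto simp: less_imp_le)
    thus "DD > 0" using Dpos[of 0] \<open>m\<ge>1\<close> by linarith
  qed
  have low: "\<forall>k<m. min a0 L \<le> alpha t k" for t
  proof (induction t)
    case 0 then show ?case using al0 by auto
  next
    case (Suc t)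
    define s where "s = (\<Sum>i\<in>{..<m} - {ks t}. D i (ks t) * alpha t i)"
    have km: "ks t < m" using ks_max by blast
    have s0: "s \<ge> 0" unfolding s_def using inv Dnn km by (intro sum_nonneg mult_nonneg_nonneg) (auto intro: less_imp_le)
    have "s \<le> (\<Sum>i\<in>{..<m} - {ks t}. D i (ks t) * U)" unfolding s_def
      using inv Dnn km by (intro sum_mono mult_left_mono) auto
    also have "\<dots> \<le> (\<Sum>i<m. D i (ks t) * U)"
      using Dnn km inv[of 0] \<open>m\<ge>1\<close> proof (intro sum_mono2)
      have "0 \<le> U" using inv[of 0] \<open>m\<ge>1\<close> by fastforce
      thus "\<And>b. b \<in> {..<m} - ({..<m} - {ks t}) \<Longrightarrow> 0 \<le> D b (ks t) * U" using Dnn km by auto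
    qed auto
    also have "\<dots> = (\<Sum>i<m. D i (ks t)) * U" by (simp add: sum_distrib_right)
    also have "\<dots> \<le> S" unfolding S_def
    proof (intro mult_right_mono sum_mono)
      fix i assume "i \<in> {..<m}"
      thus "D i (ks t) \<le> (\<Sum>k<m. D i k)" using km Dnn by (intro member_le_sum) auto
    next
      show "0 \<le> U" using inv[of 0] \<open>m\<ge>1\<close> by fastforce
    qed
    finally have sS: "s \<le> S" .
    have "D (ks t) (ks t) \<le> DD" unfolding DD_def using km Dnn by (intro member_le_sum) auto
    hence "L \<le> alpha (Suc t) (ks t)"
      using upd[OF s_def] upd_ge[OF Dpos[OF km] s0 sS] unfolding L_def by simp
    thus ?case using Suc step_other by (metis min.coboundedI2)
  qed
  show ?thesis
  proof
    show "\<exists>U. \<forall>t. \<forall>k<m. alpha t k \<le> U" using inv by blast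
    show "\<exists>B>0. \<forall>t. \<forall>k<m. alpha t k > B"
    proof (intro exI[of _ "min a0 L / 2"] conjI allI impI)
      show "min a0 L / 2 > 0" using a0pos Lpos by simp
      fix t k assume "k < m"
      hence "min a0 L \<le> alpha t k" using low by blast
      moreover have "min a0 L / 2 < min a0 L" using a0pos Lpos by (simp add: min_def)
      ultimately show "min a0 L / 2 < alpha t k" by linarith
    qed
  qed
qed

end
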